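(* Let $M$ be a free $\mathbb{Z}$-module of rank $2g$ with basis $\{a_1, \dots, a_g, b_1, \dots, b_g\}$ and the skew-symmetric bilinear pairing $\langle \cdot, \cdot \rangle$ determined by $\langle a_{i}, b_{i} \rangle = -1$ and $\langle a_{i}, a_{j} \rangle = \langle b_{i}, b_{j} \rangle = \langle a_{i}, b_{j} \rangle = 0$ for $i < j$. Let $c_{1}, \dots, c_{2g} \in M$ with $c_{i} \equiv a_{(i + 1)/2} + \dots + a_{g} + b_{(i + 1)/2} \pmod{2M}$ for $i$ odd and $c_{i} \equiv a_{i/2 + 1} + \dots + a_{g} + b_{i/2} \pmod{2M}$ for $i$ even. Let $t_{i} = T_{c_{i}} - 1$ and let $\bar{t}_{i}$ be the reduction of $t_{i}$ modulo $2$, an element of $\mathfrak{sp}(M \otimes \mathbb{F}_{2})$, for $1 \leq i \leq 2g$. Then the set $\{\bar{t}_{i}\}_{1 \leq i \leq 2g} \cup \{[\bar{t}_{i}, \bar{t}_{j}]\}_{1 \leq i < j \leq 2g}$ is an $\mathbb{F}_{2}$-basis of $\mathfrak{sp}(M \otimes \mathbb{F}_{2})$.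
   Context: For $c \in M$, $T_c$ is the transvection $v \mapsto v + \langle v, c\rangle c$. $\mathfrak{sp}(M\otimes\mathbb{F}_2)$ is the $\mathbb{F}_2$-Lie algebra of endomorphisms $X$ of $M\otimes\mathbb{F}_2$ with $\langle Xv, w\rangle + \langle v, Xw\rangle = 0$ for all $v,w$ (of dimension $2g^2+g$), with bracket $[X,Y]=XY-YX$. *)

theory Defs
  imports Main "HOL-Library.Z2"
begin

text \<open>Coordinates: M = Z^{2g}; coordinate m-1 is a_m, coordinate g+m-1 is b_m (1 \<le> m \<le> g).\<close>

definition Mset :: "nat \<Rightarrow> (nat \<Rightarrow> int) set" where
  "Mset g = {v. \<forall>k\<ge>2*g. v k = 0}"

definition avec :: "nat \<Rightarrow> nat \<Rightarrow> nat \<Rightarrow> int" where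
  "avec g m = (\<lambda>k. if k = m - 1 then 1 else 0)"

definition bvec :: "nat \<Rightarrow> nat \<Rightarrow> nat \<Rightarrow> int" where
  "bvec g m = (\<lambda>k. if k = g + m - 1 then 1 else 0)"

text \<open>Gram matrix of the pairing on the basis: <a_i,b_i> = -1, <b_i,a_i> = 1, all others 0.\<close>
definition gram :: "nat \<Rightarrow> nat \<Rightarrow> nat \<Rightarrow> int" where
  "gram g k l = (if k < g \<and> l = k + g then -1 else if l < g \<and> k = l + g then 1 else 0)"

definition pair :: "nat \<Rightarrow> (nat \<Rightarrow> int) \<Rightarrow> (nat \<Rightarrow> int) \<Rightarrow> int" where
  "pair g v w = (\<Sum>k<2*g. \<Sum>l<2*g. v k * w l * gram g k l)"

definition transvection :: "nat \<Rightarrow> (nat \<Rightarrow> int) \<Rightarrow> (nat \<Rightarrow> int) \<Rightarrow> (nat \<Rightarrow> int)" where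
  "transvection g c v = (\<lambda>k. v k + pair g v c * c k)"

definition cref :: "nat \<Rightarrow> nat \<Rightarrow> nat \<Rightarrow> int" where
  "cref g i = (if odd i
     then (\<lambda>k. (\<Sum>m\<in>{(i+1) div 2..g}. avec g m k) + bvec g ((i+1) div 2) k)
     else (\<lambda>k. (\<Sum>m\<in>{i div 2 + 1..g}. avec g m k) + bvec g (i div 2) k))"

definition unitvec :: "nat \<Rightarrow> nat \<Rightarrow> int" where
  "unitvec l = (\<lambda>k. if k = l then 1 else 0)"

definition reduce_endo :: "nat \<Rightarrow> ((nat \<Rightarrow> int) \<Rightarrow> (nat \<Rightarrow> int)) \<Rightarrow> nat \<Rightarrow> nat \<Rightarrow> bit" where
  "reduce_endo g f = (\<lambda>k l. if k < 2*g \<and> l < 2*g then of_int (f (unitvec l) k) else 0)"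

definition tbar :: "nat \<Rightarrow> (nat \<Rightarrow> int) \<Rightarrow> nat \<Rightarrow> nat \<Rightarrow> bit" where
  "tbar g c = reduce_endo g (\<lambda>v k. transvection g c v k - v k)"

definition V2 :: "nat \<Rightarrow> (nat \<Rightarrow> bit) set" where
  "V2 g = {v. \<forall>k\<ge>2*g. v k = 0}"

definition pair2 :: "nat \<Rightarrow> (nat \<Rightarrow> bit) \<Rightarrow> (nat \<Rightarrow> bit) \<Rightarrow> bit" where
  "pair2 g v w = (\<Sum>k<2*g. \<Sum>l<2*g. v k * w l * of_int (gram g k l))"

definition apply_mat :: "nat \<Rightarrow> (nat \<Rightarrow> nat \<Rightarrow> bit) \<Rightarrow> (nat \<Rightarrow> bit) \<Rightarrow> (nat \<Rightarrow> bit)" where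
  "apply_mat g X v = (\<lambda>k. if k < 2*g then (\<Sum>l<2*g. X k l * v l) else 0)"

definition Mat2 :: "nat \<Rightarrow> (nat \<Rightarrow> nat \<Rightarrow> bit) set" where
  "Mat2 g = {X. \<forall>k l. (k \<ge> 2*g \<or> l \<ge> 2*g) \<longrightarrow> X k l = 0}"

definition sp2 :: "nat \<Rightarrow> (nat \<Rightarrow> nat \<Rightarrow> bit) set" where
  "sp2 g = {X \<in> Mat2 g. \<forall>v\<in>V2 g. \<forall>w\<in>V2 g.
              pair2 g (apply_mat g X v) w + pair2 g v (apply_mat g X w) = 0}"

definition mat_mult :: "nat \<Rightarrow> (nat \<Rightarrow> nat \<Rightarrow> bit) \<Rightarrow> (nat \<Rightarrow> nat \<Rightarrow> bit) \<Rightarrow> (nat \<Rightarrow> nat \<Rightarrow> bit)" where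
  "mat_mult g X Y = (\<lambda>k l. if k < 2*g \<and> l < 2*g then (\<Sum>m<2*g. X k m * Y m l) else 0)"

definition bracket :: "nat \<Rightarrow> (nat \<Rightarrow> nat \<Rightarrow> bit) \<Rightarrow> (nat \<Rightarrow> nat \<Rightarrow> bit) \<Rightarrow> (nat \<Rightarrow> nat \<Rightarrow> bit)" where
  "bracket g X Y = (\<lambda>k l. mat_mult g X Y k l - mat_mult g Y X k l)"

definition is_F2_basis :: "'i set \<Rightarrow> ('i \<Rightarrow> nat \<Rightarrow> nat \<Rightarrow> bit) \<Rightarrow> (nat \<Rightarrow> nat \<Rightarrow> bit) set \<Rightarrow> bool" where
  "is_F2_basis S f V \<longleftrightarrow> (\<forall>s\<in>S. f s \<in> V) \<and>
     (\<forall>X\<in>V. \<exists>!lam. (\<forall>s. s \<notin> S \<longrightarrow> lam s = 0) \<and>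
                    X = (\<lambda>k l. \<Sum>s\<in>S. lam s * f s k l))"

end

theory Submission
  imports Defs
begin

declare add_bit_eq_xor[simp del] mult_bit_eq_and[simp del]

lemma bit_add_self: "(x::bit) + x = 0"
  by (metis bit_2_eq_0 mult_2 mult_zero_left)
lemma bit_minus: "(x::bit) - y = x + y" by (simp only: minus_bit_def)
lemma bit_eq_of_add0: "(x::bit) + y = 0 \<Longrightarrow> x = y"
proof -
  assume h: "x + y = 0"
  have "x = x + (y + y)" by (simp add: bit_add_self)
  also have "\<dots> = (x + y) + y" by (simp add: add.assoc)
  finally show "x = y" using h by simp
qed
lemma of_int_bit_cong: "(2::int) dvd (x - y) \<Longrightarrow> (of_int x :: bit) = of_int y"
proof -
  assume "(2::int) dvd (x - y)"
  then obtain m where "x - y = 2*m" by (auto simp: dvd_def)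
  then have "x = y + 2*m" by simp
  then show ?thesis by simp
qed
lemma of_nat_odd_bit: "odd n \<Longrightarrow> (of_nat n :: bit) = 1"
proof -
  assume "odd n"
  then obtain m where "n = 2*m+1" using oddE by blast
  then show ?thesis by simp
qed
lemma of_int_neg1_bit[simp]: "(of_int (-1) :: bit) = 1" by simp

definition sig :: "nat \<Rightarrow> nat \<Rightarrow> nat" where
  "sig g k = (if k < g then k + g else k - g)"
definition Bf :: "nat \<Rightarrow> (nat \<Rightarrow> bit) \<Rightarrow> (nat \<Rightarrow> bit) \<Rightarrow> bit" where
  "Bf g x y = (\<Sum>k<2*g. x k * y (sig g k))"
definition outer :: "nat \<Rightarrow> (nat \<Rightarrow> bit) \<Rightarrow> (nat \<Rightarrow> bit) \<Rightarrow> nat \<Rightarrow> nat \<Rightarrow> bit" where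
  "outer g x y = (\<lambda>k l. if k < 2*g \<and> l < 2*g then x k * y (sig g l) else 0)"
definition ev :: "nat \<Rightarrow> nat \<Rightarrow> bit" where
  "ev m = (\<lambda>k. if k = m then 1 else 0)"

lemma sum_split2: "(\<Sum>k<2*g. f k) = (\<Sum>k<g. f k) + (\<Sum>k<g. f (k+g))"
  for f :: "nat \<Rightarrow> 'a::comm_monoid_add"
proof -
  have "(\<Sum>k<2*g. f k) = (\<Sum>k\<in>{0..<g}. f k) + (\<Sum>k\<in>{g..<2*g}. f k)"
    using sum.atLeastLessThan_concat[of 0 g "2*g" f] by (simp add: atLeast0LessThan)
  also have "(\<Sum>k\<in>{g..<2*g}. f k) = (\<Sum>k\<in>{0..<g}. f (k+g))"
    using sum.shift_bounds_nat_ivl[of f 0 g g] by (simp add: mult_2)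
  finally show ?thesis by (simp add: atLeast0LessThan)
qed

lemma sig_lt: "k < 2*g \<Longrightarrow> sig g k < 2*g" by (auto simp add: sig_def)

lemma gram_bit: "k < 2*g \<Longrightarrow> l < 2*g \<Longrightarrow> (of_int (gram g k l) :: bit) = (if l = sig g k then 1 else 0)"
  by (auto simp: gram_def sig_def)

lemma pair2_eq: "pair2 g v w = Bf g v w"
proof -
  have "\<And>k. k < 2*g \<Longrightarrow> (\<Sum>l<2*g. v k * w l * of_int (gram g k l)) = v k * w (sig g k)"
  proof -
    fix k assume k: "k < 2*g"
    have "(\<Sum>l<2*g. v k * w l * of_int (gram g k l)) = (\<Sum>l<2*g. if l = sig g k then v k * w l else 0)"
      by (rule sum.cong) (auto simp: gram_bit k)
    also have "\<dots> = v k * w (sig g k)" using sig_lt[OF k] by (simp add: sum.delta)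
    finally show "(\<Sum>l<2*g. v k * w l * of_int (gram g k l)) = v k * w (sig g k)" .
  qed
  then show ?thesis unfolding pair2_def Bf_def by (intro sum.cong) auto
qed

lemma Bf_split: "Bf g x y = (\<Sum>k<g. x k * y (k+g) + x (k+g) * y k)"
  unfolding Bf_def sum_split2 sum.distrib by (simp add: sig_def)

lemma Bf_sym: "Bf g x y = Bf g y x"
  unfolding Bf_split by (intro sum.cong) (simp_all add: mult.commute add.commute)

lemma Bf_lin_left: "Bf g (\<lambda>k. \<Sum>s\<in>A. a s * x s k) y = (\<Sum>s\<in>A. a s * Bf g (x s) y)"
  unfolding Bf_def by (simp add: sum_distrib_left sum_distrib_right mult.assoc) (rule sum.swap)

lemma Bf_lin_right: "Bf g y (\<lambda>k. \<Sum>s\<in>A. a s * x s k) = (\<Sum>s\<in>A. a s * Bf g y (x s))"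
  by (simp add: Bf_sym[of g y] Bf_lin_left)

lemma Bf_add_left: "Bf g (\<lambda>k. x k + y k) z = Bf g x z + Bf g y z"
  unfolding Bf_def by (simp add: distrib_right sum.distrib)

lemma Bf_add_right: "Bf g z (\<lambda>k. x k + y k) = Bf g z x + Bf g z y"
  by (simp add: Bf_sym[of g z] Bf_add_left)

lemma Bf_scale_left: "Bf g (\<lambda>k. a * x k) y = a * Bf g x y"
  unfolding Bf_def by (simp add: sum_distrib_left mult.assoc)

lemma Bf_scale_right: "Bf g y (\<lambda>k. a * x k) = a * Bf g y x"
  by (simp add: Bf_sym[of g y] Bf_scale_left)

lemma Bf_zero_right: "Bf g y (\<lambda>k. 0) = 0"
  unfolding Bf_def by simp

lemma apply_V2: "apply_mat g X v \<in> V2 g"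
  by (simp add: apply_mat_def V2_def)

lemma apply_mat_sum: "apply_mat g (\<lambda>k l. \<Sum>s\<in>A. a s * M s k l) v = (\<lambda>k. \<Sum>s\<in>A. a s * apply_mat g (M s) v k)"
  unfolding apply_mat_def
  by (rule ext) (simp add: sum_distrib_left sum_distrib_right mult.assoc sum.swap[of _ A])

lemma apply_mat_add: "apply_mat g (\<lambda>k l. X k l + Y k l) v = (\<lambda>k. apply_mat g X v k + apply_mat g Y v k)"
  unfolding apply_mat_def by (rule ext) (simp add: distrib_right sum.distrib)

lemma apply_outer: "x \<in> V2 g \<Longrightarrow> apply_mat g (outer g x y) v = (\<lambda>k. Bf g v y * x k)"
  unfolding apply_mat_def outer_def Bf_def V2_def
  by (rule ext) (auto simp: sum_distrib_left sum_distrib_right mult.assoc mult.left_commute mult.commute)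

lemma apply_ev: "X \<in> Mat2 g \<Longrightarrow> k < 2*g \<Longrightarrow> l < 2*g \<Longrightarrow> apply_mat g X (ev l) k = X k l"
  unfolding apply_mat_def ev_def by (simp add: sum.delta' if_distrib cong: if_cong)

lemma ev_V2: "l < 2*g \<Longrightarrow> ev l \<in> V2 g" by (simp add: ev_def V2_def)

lemma mat_eqI: "X \<in> Mat2 g \<Longrightarrow> Y \<in> Mat2 g \<Longrightarrow> (\<And>v. v \<in> V2 g \<Longrightarrow> apply_mat g X v = apply_mat g Y v) \<Longrightarrow> X = Y"
proof (intro ext)
  fix k l
  assume X: "X \<in> Mat2 g" and Y: "Y \<in> Mat2 g" and h: "\<And>v. v \<in> V2 g \<Longrightarrow> apply_mat g X v = apply_mat g Y v"
  show "X k l = Y k l"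
  proof (cases "k < 2*g \<and> l < 2*g")
    case True
    then show ?thesis using apply_ev[OF X, of k l] apply_ev[OF Y, of k l] h[OF ev_V2[of l]] by auto
  next
    case False
    then show ?thesis using X Y by (auto simp: Mat2_def)
  qed
qed

lemma outer_Mat2: "outer g x y \<in> Mat2 g" by (simp add: outer_def Mat2_def)

lemma mat_mult_outer: "mat_mult g (outer g x y) (outer g z w) = (\<lambda>k l. Bf g z y * outer g x w k l)"
  unfolding mat_mult_def outer_def Bf_def
  by (intro ext) (auto simp: sum_distrib_left sum_distrib_right mult.assoc mult.left_commute mult.commute)


definition Cv :: "nat \<Rightarrow> nat \<Rightarrow> nat \<Rightarrow> bit" where
  "Cv g i = (\<lambda>k. (if i div 2 \<le> k \<and> k < g then 1 else 0) + (if k = g + (i - 1) div 2 then 1 else 0))"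

lemma avec_sum: "1 \<le> a \<Longrightarrow> (\<Sum>m\<in>{a..g}. avec g m k) = (if a - 1 \<le> k \<and> k < g then 1 else 0)"
proof -
  assume a: "1 \<le> a"
  have "(\<Sum>m\<in>{a..g}. avec g m k) = (\<Sum>m\<in>{a..g}. if m = k + 1 then 1 else 0)"
    by (rule sum.cong) (use a in \<open>auto simp: avec_def\<close>)
  also have "\<dots> = (if a - 1 \<le> k \<and> k < g then 1 else 0)" using a by (simp add: sum.delta') arith
  finally show ?thesis .
qed

lemma cref_eq: "1 \<le> i \<Longrightarrow> cref g i k = (if i div 2 \<le> k \<and> k < g then 1 else 0) + (if k = g + (i - 1) div 2 then 1 else 0)"
proof (cases "odd i")
  case True
  assume i: "1 \<le> i"
  have a: "1 \<le> (i+1) div 2" using i by simp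
  have e1: "(i+1) div 2 - 1 = i div 2" using True by presburger
  have e2: "g + (i+1) div 2 - 1 = g + (i - 1) div 2" using True i by presburger
  show ?thesis using True avec_sum[OF a, of g k] e1 e2 by (simp add: cref_def bvec_def)
next
  case False
  assume i: "1 \<le> i"
  have a: "1 \<le> i div 2 + 1" by simp
  have e2: "g + i div 2 - 1 = g + (i - 1) div 2" using False i by presburger
  show ?thesis using False avec_sum[OF a, of g k] e2 by (simp add: cref_def bvec_def)
qed

lemma Cv_cref: "1 \<le> i \<Longrightarrow> (\<lambda>k. of_int (cref g i k) :: bit) = Cv g i"
  by (rule ext) (simp add: cref_eq Cv_def)

lemma Cv_V2: "1 \<le> i \<Longrightarrow> i \<le> 2*g \<Longrightarrow> Cv g i \<in> V2 g"
  by (auto simp: V2_def Cv_def)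

lemma Bf_Cv: assumes i: "1 \<le> i" "i \<le> 2*g" and j: "1 \<le> j" "j \<le> 2*g"
  shows "Bf g (Cv g i) (Cv g j) = (if i = j then 0 else 1)"
proof -
  have "Bf g (Cv g i) (Cv g j) = (\<Sum>k<g. (if k = (j - 1) div 2 then (if i div 2 \<le> k then 1 else 0) else 0)
     + (if k = (i - 1) div 2 then (if j div 2 \<le> k then 1 else 0) else 0))"
    unfolding Bf_split by (rule sum.cong) (auto simp: Cv_def)
  also have "\<dots> = (if i div 2 \<le> (j - 1) div 2 then 1 else 0) + (if j div 2 \<le> (i - 1) div 2 then 1 else 0)"
  proof -
    have "(j - 1) div 2 < g" "(i - 1) div 2 < g" using i j by auto
    then show ?thesis by (simp add: sum.distrib sum.delta)
  qed
  also have "\<dots> = (if i = j then 0 else 1)"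
  proof (cases "i = j")
    case True then show ?thesis by (simp add: bit_add_self)
  next
    case False
    then have "i < j \<or> j < i" by arith
    then show ?thesis
    proof
      assume "i < j"
      then have "i div 2 \<le> (j - 1) div 2" using div_le_mono by simp
      moreover have "(i + 1) div 2 \<le> j div 2" using \<open>i < j\<close> div_le_mono by simp
      moreover have "(i + 1) div 2 = (i - 1) div 2 + 1" using i by presburger
      ultimately have "i div 2 \<le> (j - 1) div 2" "\<not> j div 2 \<le> (i - 1) div 2" by simp_all
      then show ?thesis using False by simp
    next
      assume "j < i"
      then have "j div 2 \<le> (i - 1) div 2" using div_le_mono by simp
      moreover have "(j + 1) div 2 \<le> i div 2" using \<open>j < i\<close> div_le_mono by simp
      moreover have "(j + 1) div 2 = (j - 1) div 2 + 1" using j by presburger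
      ultimately have "\<not> i div 2 \<le> (j - 1) div 2" "j div 2 \<le> (i - 1) div 2" by simp_all
      then show ?thesis using False by simp
    qed
  qed
  finally show ?thesis .
qed




definition Iset :: "nat \<Rightarrow> nat set" where "Iset g = {1..2*g}"

definition inspan :: "nat \<Rightarrow> (nat \<Rightarrow> bit) \<Rightarrow> bool" where
  "inspan g v \<longleftrightarrow> (\<exists>\<alpha>. v = (\<lambda>k. \<Sum>i\<in>Iset g. \<alpha> i * Cv g i k))"

lemma if_mult_delta: "(if j = i then 1 else 0) * c = (if j = i then c else (0::bit))" by simp

lemma finite_Iset[simp]: "finite (Iset g)" by (simp add: Iset_def)

lemma inspan_Cv: "i \<in> Iset g \<Longrightarrow> inspan g (Cv g i)"
  unfolding inspan_def
  by (rule exI[of _ "\<lambda>j. if j = i then 1 else 0"]) (simp only: if_mult_delta sum.delta finite_Iset if_True)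

lemma inspan_sum: "(\<And>s. s \<in> A \<Longrightarrow> inspan g (x s)) \<Longrightarrow> inspan g (\<lambda>k. \<Sum>s\<in>A. a s * x s k)"
proof -
  assume h: "\<And>s. s \<in> A \<Longrightarrow> inspan g (x s)"
  then have "\<forall>s\<in>A. \<exists>\<alpha>. x s = (\<lambda>k. \<Sum>i\<in>Iset g. \<alpha> i * Cv g i k)" by (simp add: inspan_def)
  then obtain f where f: "\<forall>s\<in>A. x s = (\<lambda>k. \<Sum>i\<in>Iset g. f s i * Cv g i k)" by (rule bchoice[elim_format]) blast
  have "(\<lambda>k. \<Sum>s\<in>A. a s * x s k) = (\<lambda>k. \<Sum>i\<in>Iset g. (\<Sum>s\<in>A. a s * f s i) * Cv g i k)"
  proof
    fix k
    have "(\<Sum>s\<in>A. a s * x s k) = (\<Sum>s\<in>A. a s * (\<Sum>i\<in>Iset g. f s i * Cv g i k))"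
      using f by (intro sum.cong) auto
    also have "\<dots> = (\<Sum>i\<in>Iset g. (\<Sum>s\<in>A. a s * f s i) * Cv g i k)"
      by (simp add: sum_distrib_left sum_distrib_right mult.assoc) (rule sum.swap)
    finally show "(\<Sum>s\<in>A. a s * x s k) = (\<Sum>i\<in>Iset g. (\<Sum>s\<in>A. a s * f s i) * Cv g i k)" .
  qed
  then show ?thesis unfolding inspan_def by (intro exI[of _ "\<lambda>i. \<Sum>s\<in>A. a s * f s i"])
qed

lemma inspan_add: "inspan g x \<Longrightarrow> inspan g y \<Longrightarrow> inspan g (\<lambda>k. x k + y k)"
  unfolding inspan_def
proof (elim exE)
  fix a b assume "x = (\<lambda>k. \<Sum>i\<in>Iset g. a i * Cv g i k)" "y = (\<lambda>k. \<Sum>i\<in>Iset g. b i * Cv g i k)"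
  then show "\<exists>\<alpha>. (\<lambda>k. x k + y k) = (\<lambda>k. \<Sum>i\<in>Iset g. \<alpha> i * Cv g i k)"
    by (intro exI[of _ "\<lambda>i. a i + b i"]) (simp add: distrib_right sum.distrib)
qed

lemma bit_cancel: "(p + x) + (q + x) = p + (q::bit)"
proof -
  have "(p + x) + (q + x) = (p + q) + (x + x)" by (simp only: add_ac)
  then show ?thesis by (simp only: bit_add_self add_0_right)
qed

lemma bit_cancel2: "(p + x) + p = (x::bit)"
proof -
  have "(p + x) + p = (p + p) + x" by (simp only: add_ac)
  then show ?thesis by (simp only: bit_add_self add_0_left)
qed

lemma ev_low: "a < g \<Longrightarrow> ev a = (\<lambda>k. Cv g (2*a+1) k + Cv g (2*a+2) k)"
proof
  fix k assume a: "a < g"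
  have e: "(2*a+1) div 2 = a" "(2*a+2) div 2 = a + 1" "(2*a+1-1) div 2 = a" "(2*a+2-1) div 2 = a" by presburger+
  have "Cv g (2*a+1) k + Cv g (2*a+2) k = (if a \<le> k \<and> k < g then 1 else 0) + (if a + 1 \<le> k \<and> k < g then 1 else 0)"
    unfolding Cv_def e by (rule bit_cancel)
  also have "\<dots> = ev a k" using a by (auto simp: ev_def)
  finally show "ev a k = Cv g (2*a+1) k + Cv g (2*a+2) k" by simp
qed

lemma ev_high: "a < g \<Longrightarrow> ev (g + a) = (\<lambda>k. Cv g (2*a+2) k + (\<Sum>b\<in>{a+1..<g}. 1 * ev b k))"
proof
  fix k assume a: "a < g"
  have e: "(2*a+2) div 2 = a + 1" "(2*a+2-1) div 2 = a" by presburger+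
  have s: "(\<Sum>b\<in>{a+1..<g}. 1 * ev b k) = (if a + 1 \<le> k \<and> k < g then 1 else 0)"
    by (simp add: ev_def sum.delta')
  have "Cv g (2*a+2) k + (\<Sum>b\<in>{a+1..<g}. 1 * ev b k) = (if k = g + a then 1 else 0)"
    unfolding Cv_def e s by (rule bit_cancel2)
  then show "ev (g + a) k = Cv g (2*a+2) k + (\<Sum>b\<in>{a+1..<g}. 1 * ev b k)" by (simp add: ev_def)
qed

lemma inspan_ev: "m < 2*g \<Longrightarrow> inspan g (ev m)"
proof -
  have low: "inspan g (ev a)" if a: "a < g" for a
    unfolding ev_low[OF a] by (rule inspan_add; rule inspan_Cv) (use a in \<open>auto simp: Iset_def\<close>)
  assume m: "m < 2*g"
  show ?thesis
  proof (cases "m < g")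
    case True then show ?thesis using low by blast
  next
    case False
    then obtain a where a: "m = g + a" "a < g" using m by (metis add_less_cancel_left le_Suc_ex mult_2 not_less)
    have s: "inspan g (\<lambda>k. \<Sum>b\<in>{a+1..<g}. 1 * ev b k)"
      by (rule inspan_sum) (rule low, simp)
    have c: "inspan g (Cv g (2*a+2))" by (rule inspan_Cv) (use a in \<open>auto simp: Iset_def\<close>)
    show ?thesis unfolding a(1) ev_high[OF a(2)] by (rule inspan_add[OF c s])
  qed
qed

lemma inspan_V2: "v \<in> V2 g \<Longrightarrow> inspan g v"
proof -
  assume v: "v \<in> V2 g"
  have "v = (\<lambda>k. \<Sum>m<2*g. v m * ev m k)"
  proof
    fix k show "v k = (\<Sum>m<2*g. v m * ev m k)"
      using v by (cases "k < 2*g") (auto simp: ev_def V2_def if_distrib sum.delta cong: if_cong)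
  qed
  note eq = this
  have h: "inspan g (\<lambda>k. \<Sum>m<2*g. v m * ev m k)"
    by (rule inspan_sum) (rule inspan_ev, simp)
  show ?thesis by (subst eq) (rule h)
qed




definition Tv :: "nat \<Rightarrow> nat \<Rightarrow> bit" where "Tv g = (\<lambda>k. \<Sum>j\<in>Iset g. Cv g j k)"
definition Dv :: "nat \<Rightarrow> nat \<Rightarrow> nat \<Rightarrow> bit" where "Dv g p = (\<lambda>k. Tv g k + Cv g p k)"

lemma Cv_V2': "i \<in> Iset g \<Longrightarrow> Cv g i \<in> V2 g" using Cv_V2 by (simp add: Iset_def)

lemma Tv_V2: "Tv g \<in> V2 g"
  using Cv_V2' by (simp add: Tv_def V2_def)

lemma Dv_V2: "p \<in> Iset g \<Longrightarrow> Dv g p \<in> V2 g"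
  using Tv_V2[of g] Cv_V2'[of p g] by (simp add: Dv_def V2_def)

lemma Bf_Cv': "i \<in> Iset g \<Longrightarrow> j \<in> Iset g \<Longrightarrow> Bf g (Cv g i) (Cv g j) = (if i = j then 0 else 1)"
  using Bf_Cv by (simp add: Iset_def)

lemma Bf_Cv_T: assumes i: "i \<in> Iset g" shows "Bf g (Cv g i) (Tv g) = 1"
proof -
  have "Tv g = (\<lambda>k. \<Sum>j\<in>Iset g. 1 * Cv g j k)" by (simp add: Tv_def)
  then have "Bf g (Cv g i) (Tv g) = (\<Sum>j\<in>Iset g. 1 * Bf g (Cv g i) (Cv g j))" by (simp only: Bf_lin_right)
  also have "\<dots> = (\<Sum>j\<in>Iset g. if i = j then 0 else 1)" by (rule sum.cong) (simp_all add: Bf_Cv' i)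
  also have "\<dots> = (if i = i then 0 else 1) + (\<Sum>j\<in>Iset g - {i}. if i = j then 0 else 1)"
    using i by (simp add: sum.remove)
  also have "(\<Sum>j\<in>Iset g - {i}. if i = j then 0 else 1) = (\<Sum>j\<in>Iset g - {i}. (1::bit))"
    by (rule sum.cong) auto
  also have "\<dots> = of_nat (card (Iset g - {i}))" by simp
  also have "card (Iset g - {i}) = 2*g - 1" using i by (simp add: Iset_def)
  also have "(of_nat (2*g - 1) :: bit) = 1" using i by (intro of_nat_odd_bit) (auto simp: Iset_def)
  finally show ?thesis by simp
qed

lemma Bf_Cv_D: "i \<in> Iset g \<Longrightarrow> p \<in> Iset g \<Longrightarrow> Bf g (Cv g i) (Dv g p) = (if i = p then 1 else 0)"
  unfolding Dv_def Bf_add_right by (simp add: Bf_Cv_T Bf_Cv')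

lemma expand: assumes v: "v \<in> V2 g" shows "v = (\<lambda>k. \<Sum>p\<in>Iset g. Bf g v (Dv g p) * Cv g p k)"
proof -
  obtain \<alpha> where a: "v = (\<lambda>k. \<Sum>i\<in>Iset g. \<alpha> i * Cv g i k)" using inspan_V2[OF v] by (auto simp: inspan_def)
  have "Bf g v (Dv g p) = \<alpha> p" if p: "p \<in> Iset g" for p
  proof -
    have "Bf g v (Dv g p) = (\<Sum>i\<in>Iset g. \<alpha> i * Bf g (Cv g i) (Dv g p))"
      by (subst a) (rule Bf_lin_left)
    also have "\<dots> = (\<Sum>i\<in>Iset g. if i = p then \<alpha> i else 0)"
      by (rule sum.cong) (simp_all add: Bf_Cv_D p)
    also have "\<dots> = \<alpha> p" using p by (simp add: sum.delta')
    finally show ?thesis .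
  qed
  then have "(\<lambda>k. \<Sum>p\<in>Iset g. Bf g v (Dv g p) * Cv g p k) = (\<lambda>k. \<Sum>i\<in>Iset g. \<alpha> i * Cv g i k)"
    by (intro ext sum.cong) auto
  then show ?thesis using a by simp
qed

definition phi :: "nat \<Rightarrow> (nat \<Rightarrow> nat \<Rightarrow> bit) \<Rightarrow> nat \<Rightarrow> nat \<Rightarrow> bit" where
  "phi g X p q = Bf g (apply_mat g X (Dv g p)) (Dv g q)"

lemma sp2_Mat2: "X \<in> sp2 g \<Longrightarrow> X \<in> Mat2 g" by (simp add: sp2_def)

lemma sp2_sym: "X \<in> sp2 g \<Longrightarrow> v \<in> V2 g \<Longrightarrow> w \<in> V2 g \<Longrightarrow> Bf g (apply_mat g X v) w = Bf g v (apply_mat g X w)"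
  unfolding sp2_def by (auto intro: bit_eq_of_add0 simp: pair2_eq)

lemma sp2_expand: assumes X: "X \<in> sp2 g" and v: "v \<in> V2 g"
  shows "apply_mat g X v = (\<lambda>k. \<Sum>p\<in>Iset g. (\<Sum>q\<in>Iset g. phi g X p q * Bf g v (Cv g q)) * Cv g p k)"
proof -
  have "Bf g (apply_mat g X v) (Dv g p) = (\<Sum>q\<in>Iset g. phi g X p q * Bf g v (Cv g q))" if p: "p \<in> Iset g" for p
  proof -
    have "Bf g (apply_mat g X v) (Dv g p) = Bf g v (apply_mat g X (Dv g p))"
      using sp2_sym[OF X v Dv_V2[OF p]] .
    also have "apply_mat g X (Dv g p) = (\<lambda>k. \<Sum>q\<in>Iset g. phi g X p q * Cv g q k)"
      unfolding phi_def by (rule expand[OF apply_V2])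
    also have "Bf g v \<dots> = (\<Sum>q\<in>Iset g. phi g X p q * Bf g v (Cv g q))" by (rule Bf_lin_right)
    finally show ?thesis .
  qed
  then show ?thesis
    by (subst expand[OF apply_V2[of g X v]]) (intro ext sum.cong, auto)
qed

lemma sp2_eq: assumes X: "X \<in> sp2 g" and Y: "Y \<in> sp2 g"
  and h: "\<And>p q. p \<in> Iset g \<Longrightarrow> q \<in> Iset g \<Longrightarrow> phi g X p q = phi g Y p q"
shows "X = Y"
proof (rule mat_eqI[OF sp2_Mat2[OF X] sp2_Mat2[OF Y]])
  fix v assume v: "v \<in> V2 g"
  show "apply_mat g X v = apply_mat g Y v"
    unfolding sp2_expand[OF X v] sp2_expand[OF Y v]
    by (intro ext sum.cong refl arg_cong2[where f="(*)"]) (simp add: h)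
qed

lemma phi_sym: "X \<in> sp2 g \<Longrightarrow> p \<in> Iset g \<Longrightarrow> q \<in> Iset g \<Longrightarrow> phi g X p q = phi g X q p"
  unfolding phi_def using sp2_sym Dv_V2 Bf_sym by metis




lemma sp2I: "X \<in> Mat2 g \<Longrightarrow> (\<And>v w. v \<in> V2 g \<Longrightarrow> w \<in> V2 g \<Longrightarrow> Bf g (apply_mat g X v) w = Bf g v (apply_mat g X w)) \<Longrightarrow> X \<in> sp2 g"
  unfolding sp2_def pair2_eq by (simp add: bit_add_self)

lemma sp2_outer_sym: assumes x: "x \<in> V2 g" shows "outer g x x \<in> sp2 g"
proof (rule sp2I[OF outer_Mat2])
  fix v w
  show "Bf g (apply_mat g (outer g x x) v) w = Bf g v (apply_mat g (outer g x x) w)"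
    unfolding apply_outer[OF x] Bf_scale_left Bf_scale_right by (simp add: Bf_sym[of g x] mult.commute)
qed

definition opair :: "nat \<Rightarrow> (nat \<Rightarrow> bit) \<Rightarrow> (nat \<Rightarrow> bit) \<Rightarrow> nat \<Rightarrow> nat \<Rightarrow> bit" where
  "opair g x y = (\<lambda>k l. outer g x y k l + outer g y x k l)"

lemma sp2_opair: assumes x: "x \<in> V2 g" and y: "y \<in> V2 g" shows "opair g x y \<in> sp2 g"
proof (rule sp2I)
  show "opair g x y \<in> Mat2 g" by (simp add: opair_def outer_def Mat2_def)
  fix v w
  show "Bf g (apply_mat g (opair g x y) v) w = Bf g v (apply_mat g (opair g x y) w)"
    unfolding opair_def apply_mat_add apply_outer[OF x] apply_outer[OF y] Bf_add_left Bf_add_right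
      Bf_scale_left Bf_scale_right
    by (simp add: Bf_sym[of g x] Bf_sym[of g y] mult.commute add.commute)
qed

lemma sp2_lincomb: assumes h: "\<And>s. s \<in> A \<Longrightarrow> M s \<in> sp2 g"
  shows "(\<lambda>k l. \<Sum>s\<in>A. a s * M s k l) \<in> sp2 g"
proof (rule sp2I)
  show "(\<lambda>k l. \<Sum>s\<in>A. a s * M s k l) \<in> Mat2 g"
    using h by (simp add: Mat2_def sp2_def)
  fix v w assume v: "v \<in> V2 g" and w: "w \<in> V2 g"
  show "Bf g (apply_mat g (\<lambda>k l. \<Sum>s\<in>A. a s * M s k l) v) w = Bf g v (apply_mat g (\<lambda>k l. \<Sum>s\<in>A. a s * M s k l) w)"
    unfolding apply_mat_sum Bf_lin_left Bf_lin_right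
    by (intro sum.cong refl arg_cong2[where f="(*)"]) (rule sp2_sym[OF h v w])
qed

lemma phi_lincomb: "phi g (\<lambda>k l. \<Sum>s\<in>A. a s * M s k l) p q = (\<Sum>s\<in>A. a s * phi g (M s) p q)"
  unfolding phi_def apply_mat_sum Bf_lin_left ..

lemma phi_outer: "x \<in> V2 g \<Longrightarrow> phi g (outer g x y) p q = Bf g (Dv g p) y * Bf g x (Dv g q)"
  unfolding phi_def by (simp add: apply_outer Bf_scale_left)

lemma phi_outer_Cv: "i \<in> Iset g \<Longrightarrow> j \<in> Iset g \<Longrightarrow> p \<in> Iset g \<Longrightarrow> q \<in> Iset g \<Longrightarrow>
   phi g (outer g (Cv g i) (Cv g j)) p q = (if j = p \<and> i = q then 1 else 0)"
  by (simp add: phi_outer Cv_V2' Bf_sym[of g "Dv g p"] Bf_Cv_D)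

lemma phi_opair: "phi g (opair g x y) p q = phi g (outer g x y) p q + phi g (outer g y x) p q"
  unfolding phi_def opair_def apply_mat_add Bf_add_left ..

definition Fam :: "nat \<Rightarrow> nat \<times> nat \<Rightarrow> nat \<Rightarrow> nat \<Rightarrow> bit" where
  "Fam g = (\<lambda>(i, j). if i = j then outer g (Cv g i) (Cv g i) else opair g (Cv g i) (Cv g j))"

definition Sset :: "nat \<Rightarrow> (nat \<times> nat) set" where
  "Sset g = {(i, j). 1 \<le> i \<and> i \<le> j \<and> j \<le> 2*g}"

lemma finite_Sset: "finite (Sset g)"
proof -
  have "Sset g \<subseteq> Iset g \<times> Iset g" by (auto simp: Sset_def Iset_def)
  then show ?thesis by (rule finite_subset) simp
qed

lemma Fam_sp2: "s \<in> Sset g \<Longrightarrow> Fam g s \<in> sp2 g"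
  by (cases s) (auto simp: Fam_def Sset_def Iset_def intro!: sp2_outer_sym sp2_opair Cv_V2)

lemma phi_Fam: assumes s: "s \<in> Sset g" and p: "p \<in> Iset g" and q: "q \<in> Iset g"
  shows "phi g (Fam g s) p q = (if s = (min p q, max p q) then 1 else 0)"
proof -
  obtain i j where ij: "s = (i, j)" by (cases s)
  have i: "i \<in> Iset g" and j: "j \<in> Iset g" and le: "i \<le> j" using s ij by (auto simp: Sset_def Iset_def)
  show ?thesis
  proof (cases "i = j")
    case True
    then show ?thesis using i p q by (auto simp: ij Fam_def phi_outer_Cv)
  next
    case False
    then show ?thesis using i j p q le
      by (auto simp: ij Fam_def phi_opair phi_outer_Cv min_def max_def)
  qed
qed

lemma phi_repr: assumes p: "p \<in> Iset g" and q: "q \<in> Iset g"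
  shows "phi g (\<lambda>k l. \<Sum>s\<in>Sset g. lam s * Fam g s k l) p q = lam (min p q, max p q)"
proof -
  have mm: "(min p q, max p q) \<in> Sset g" using p q by (auto simp: Sset_def Iset_def min_def max_def)
  have "phi g (\<lambda>k l. \<Sum>s\<in>Sset g. lam s * Fam g s k l) p q = (\<Sum>s\<in>Sset g. lam s * phi g (Fam g s) p q)"
    by (rule phi_lincomb)
  also have "\<dots> = (\<Sum>s\<in>Sset g. if s = (min p q, max p q) then lam s else 0)"
    by (rule sum.cong) (simp_all add: phi_Fam p q)
  also have "\<dots> = lam (min p q, max p q)" using mm finite_Sset by (simp add: sum.delta')
  finally show ?thesis .
qed

theorem main_basis: "is_F2_basis (Sset g) (Fam g) (sp2 g)"
  unfolding is_F2_basis_def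
proof (intro conjI ballI)
  fix s assume "s \<in> Sset g" then show "Fam g s \<in> sp2 g" by (rule Fam_sp2)
next
  fix X assume X: "X \<in> sp2 g"
  define lam0 where "lam0 = (\<lambda>s. if s \<in> Sset g then phi g X (fst s) (snd s) else 0)"
  show "\<exists>!lam. (\<forall>s. s \<notin> Sset g \<longrightarrow> lam s = 0) \<and> X = (\<lambda>k l. \<Sum>s\<in>Sset g. lam s * Fam g s k l)"
  proof (rule ex1I[of _ lam0])
    show "(\<forall>s. s \<notin> Sset g \<longrightarrow> lam0 s = 0) \<and> X = (\<lambda>k l. \<Sum>s\<in>Sset g. lam0 s * Fam g s k l)"
    proof
      show "\<forall>s. s \<notin> Sset g \<longrightarrow> lam0 s = 0" by (simp add: lam0_def)
      show "X = (\<lambda>k l. \<Sum>s\<in>Sset g. lam0 s * Fam g s k l)"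
      proof (rule sp2_eq[OF X sp2_lincomb[OF Fam_sp2]])
        fix p q assume p: "p \<in> Iset g" and q: "q \<in> Iset g"
        have mm: "(min p q, max p q) \<in> Sset g" using p q by (auto simp: Sset_def Iset_def min_def max_def)
        have "phi g X (min p q) (max p q) = phi g X p q"
          using phi_sym[OF X p q] by (cases "p \<le> q") (auto simp: min_def max_def)
        then show "phi g X p q = phi g (\<lambda>k l. \<Sum>s\<in>Sset g. lam0 s * Fam g s k l) p q"
          unfolding phi_repr[OF p q] using mm by (simp add: lam0_def)
      qed
    qed
  next
    fix lam assume h: "(\<forall>s. s \<notin> Sset g \<longrightarrow> lam s = 0) \<and> X = (\<lambda>k l. \<Sum>s\<in>Sset g. lam s * Fam g s k l)"
    show "lam = lam0"
    proof
      fix s show "lam s = lam0 s"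
      proof (cases "s \<in> Sset g")
        case False then show ?thesis using conjunct1[OF h] unfolding lam0_def by (simp del: split_paired_All)
      next
        case True
        obtain p q where s: "s = (p, q)" by (cases s)
        have p: "p \<in> Iset g" and q: "q \<in> Iset g" and le: "p \<le> q" using True s by (auto simp: Sset_def Iset_def)
        have "phi g X p q = lam (min p q, max p q)" using h phi_repr[OF p q] by simp
        then show ?thesis using True le by (simp add: s lam0_def min_def max_def)
      qed
    qed
  qed
qed




lemma of_int_pair: "(of_int (pair g v w) :: bit) = pair2 g (\<lambda>k. of_int (v k)) (\<lambda>k. of_int (w k))"
  by (simp add: pair_def pair2_def of_int_sum)

lemma Bf_ev: "l < 2*g \<Longrightarrow> Bf g (ev l) y = y (sig g l)"
proof -
  assume l: "l < 2*g"
  have "Bf g (ev l) y = (\<Sum>k<2*g. if k = l then y (sig g k) else 0)"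
    unfolding Bf_def ev_def by (rule sum.cong) simp_all
  also have "\<dots> = y (sig g l)" using l by (simp add: sum.delta)
  finally show ?thesis .
qed

lemma unitvec_ev: "(\<lambda>k. (of_int (unitvec l k) :: bit)) = ev l"
  by (rule ext) (simp add: unitvec_def ev_def)

lemma tbar_outer: assumes y: "(\<lambda>k. (of_int (c' k) :: bit)) = y"
  shows "tbar g c' = outer g y y"
proof (intro ext)
  fix k l
  show "tbar g c' k l = outer g y y k l"
  proof (cases "k < 2*g \<and> l < 2*g")
    case True
    have "(of_int (transvection g c' (unitvec l) k - unitvec l k) :: bit)
        = of_int (pair g (unitvec l) c') * of_int (c' k)" by (simp add: transvection_def)
    also have "\<dots> = y (sig g l) * y k"
      unfolding of_int_pair unitvec_ev pair2_eq y using True by (simp add: Bf_ev fun_cong[OF y])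
    finally show ?thesis using True by (simp add: tbar_def reduce_endo_def outer_def mult.commute)
  next
    case False then show ?thesis by (auto simp: tbar_def reduce_endo_def outer_def)
  qed
qed

lemma bracket_outer: "bracket g (outer g x x) (outer g y y) = (\<lambda>k l. Bf g y x * outer g x y k l + Bf g x y * outer g y x k l)"
  unfolding bracket_def mat_mult_outer by (simp only: bit_minus)

lemma is_F2_basis_cong: "(\<And>s. s \<in> S \<Longrightarrow> f s = f' s) \<Longrightarrow> is_F2_basis S f V = is_F2_basis S f' V"
proof -
  assume h: "\<And>s. s \<in> S \<Longrightarrow> f s = f' s"
  have e: "\<And>lam. (\<lambda>k l. \<Sum>s\<in>S. lam s * f s k l) = (\<lambda>k l. \<Sum>s\<in>S. lam s * f' s k l)"
    using h by (intro ext sum.cong) auto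
  show ?thesis unfolding is_F2_basis_def e using h by auto
qed

theorem lemma3p2:
  fixes g :: nat and c :: "nat \<Rightarrow> nat \<Rightarrow> int"
  assumes cM: "\<And>i. 1 \<le> i \<Longrightarrow> i \<le> 2*g \<Longrightarrow> c i \<in> Mset g"
    and ccong: "\<And>i k. 1 \<le> i \<Longrightarrow> i \<le> 2*g \<Longrightarrow> (2::int) dvd (c i k - cref g i k)"
  shows "is_F2_basis
           ({(i, i) | i. 1 \<le> i \<and> i \<le> 2*g} \<union> {(i, j) | i j. 1 \<le> i \<and> i < j \<and> j \<le> 2*g})
           (\<lambda>(i, j). if i = j then tbar g (c i) else bracket g (tbar g (c i)) (tbar g (c j)))
           (sp2 g)"
proof -
  have S: "{(i, i) | i. 1 \<le> i \<and> i \<le> 2*g} \<union> {(i, j) | i j. 1 \<le> i \<and> i < j \<and> j \<le> 2*g} = Sset g"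
    by (auto simp: Sset_def)
  have Cb: "(\<lambda>k. (of_int (c i k) :: bit)) = Cv g i" if "1 \<le> i" "i \<le> 2*g" for i
  proof -
    have "(\<lambda>k. (of_int (c i k) :: bit)) = (\<lambda>k. of_int (cref g i k))"
      by (rule ext) (rule of_int_bit_cong[OF ccong[OF that]])
    then show ?thesis using Cv_cref[OF that(1)] by simp
  qed
  have T: "tbar g (c i) = outer g (Cv g i) (Cv g i)" if "1 \<le> i" "i \<le> 2*g" for i
    by (rule tbar_outer[OF Cb[OF that]])
  have fam: "(\<lambda>(i, j). if i = j then tbar g (c i) else bracket g (tbar g (c i)) (tbar g (c j))) s = Fam g s"
    if s: "s \<in> Sset g" for s
  proof -
    obtain i j where ij: "s = (i, j)" by (cases s)
    have i: "1 \<le> i" "i \<le> 2*g" and j: "1 \<le> j" "j \<le> 2*g" using s ij by (auto simp: Sset_def)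
    show ?thesis
    proof (cases "i = j")
      case True then show ?thesis using T[OF i] by (simp add: ij Fam_def)
    next
      case False
      then show ?thesis using T[OF i] T[OF j] Bf_Cv[OF j i] Bf_Cv[OF i j]
        by (simp add: ij Fam_def bracket_outer opair_def)
    qed
  qed
  have "is_F2_basis (Sset g) (\<lambda>(i, j). if i = j then tbar g (c i) else bracket g (tbar g (c i)) (tbar g (c j))) (sp2 g)
     = is_F2_basis (Sset g) (Fam g) (sp2 g)"
    by (rule is_F2_basis_cong) (rule fam)
  then show ?thesis unfolding S using main_basis by simp
qed


end
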